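(* Let $G$ be a finite graph and $\kappa$ a positive integer, and for each vertex $u$ let $\mathbb{F}(u)$ be a set of partial colorings of $G$ in each of which $u$ is colored. If every set $\mathbb{F}(u)$ is closed upward, then the set of allowed colorings is closed downward. Consequently, in that case, for any vertex $v$ and any partial coloring $\varphi\in\mathbb{F}(v)$ such that uncoloring $v$ in $\varphi$ yields an allowed coloring, uncoloring any set $S$ of vertices with $v\in S$ yields an allowed coloring.
   Context: A partial coloring of $G$ is a map $\varphi: V(G)\to\{\bullet,1,\dots,\kappa\}$, where $\bullet$ means uncolored. A partial coloring $\varphi$ is allowed if and only if either no vertex is colored, or there exists a colored vertex $v$ with $\varphi\notin\mathbb{F}(v)$ such that the coloring obtained from $\varphi$ by uncoloring $v$ is allowed (recursive definition). A set $X$ of partial colorings is closed upward (resp. closed downward) if, for any partial coloring in $X$, coloring any uncolored vertex with any color (resp. uncoloring any colored vertex) yields a partial coloring in $X$. *)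

theory Defs
  imports Main
begin

(* A partial coloring of a graph with vertex set V and colors {1..kappa}:
   a map 'v => nat option, None = uncolored (the bullet), Some c = color c.
   Vertices outside V are always None. *)
definition partial_colorings :: "'v set \<Rightarrow> nat \<Rightarrow> ('v \<Rightarrow> nat option) set" where
  "partial_colorings V \<kappa> =
     {\<phi>. (\<forall>x. x \<notin> V \<longrightarrow> \<phi> x = None) \<and> (\<forall>x c. \<phi> x = Some c \<longrightarrow> 1 \<le> c \<and> c \<le> \<kappa>)}"

inductive allowed :: "'v set \<Rightarrow> nat \<Rightarrow> ('v \<Rightarrow> ('v \<Rightarrow> nat option) set) \<Rightarrow> ('v \<Rightarrow> nat option) \<Rightarrow> bool"
  for V \<kappa> F where
  empty: "allowed V \<kappa> F (\<lambda>_. None)"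
| step: "\<phi> \<in> partial_colorings V \<kappa> \<Longrightarrow> v \<in> V \<Longrightarrow> \<phi> v \<noteq> None \<Longrightarrow> \<phi> \<notin> F v
         \<Longrightarrow> allowed V \<kappa> F (\<phi>(v := None)) \<Longrightarrow> allowed V \<kappa> F \<phi>"

definition closed_upward :: "'v set \<Rightarrow> nat \<Rightarrow> ('v \<Rightarrow> nat option) set \<Rightarrow> bool" where
  "closed_upward V \<kappa> X \<longleftrightarrow>
     (\<forall>\<phi>\<in>X. \<forall>v\<in>V. \<phi> v = None \<longrightarrow> (\<forall>c\<in>{1..\<kappa>}. \<phi>(v := Some c) \<in> X))"

definition closed_downward :: "'v set \<Rightarrow> ('v \<Rightarrow> nat option) set \<Rightarrow> bool" where
  "closed_downward V X \<longleftrightarrow> (\<forall>\<phi>\<in>X. \<forall>v\<in>V. \<phi> v \<noteq> None \<longrightarrow> \<phi>(v := None) \<in> X)"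

end

theory Submission
  imports Defs
begin

lemma down1:
  assumes F3: "\<forall>u\<in>V. closed_upward V \<kappa> (F u)"
  shows "allowed V \<kappa> F \<phi> \<Longrightarrow> \<phi> v \<noteq> None \<Longrightarrow> allowed V \<kappa> F (\<phi>(v := None))"
proof (induction arbitrary: v rule: allowed.induct)
  case empty
  then show ?case by simp
next
  case (step \<phi> w)
  show ?case
  proof (cases "v = w")
    case True
    then show ?thesis using step.hyps(5) by (simp only:)
  next
    case False
    obtain c where c: "\<phi> v = Some c" using step.prems by auto
    have vV: "v \<in> V" and c1: "1 \<le> c \<and> c \<le> \<kappa>"
      using step.hyps(1) c unfolding partial_colorings_def by (force, force)
    let ?\<psi> = "\<phi>(v := None)"
    have pc: "?\<psi> \<in> partial_colorings V \<kappa>"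
      using step.hyps(1) unfolding partial_colorings_def by auto
    have eq: "?\<psi>(v := Some c) = \<phi>" using c by auto
    have notF: "?\<psi> \<notin> F w"
    proof
      assume "?\<psi> \<in> F w"
      moreover have "closed_upward V \<kappa> (F w)" using F3 step.hyps(2) by blast
      ultimately have "?\<psi>(v := Some c) \<in> F w"
        using vV c1 unfolding closed_upward_def
        by (metis atLeastAtMost_iff fun_upd_same)
      then show False using eq step.hyps(4) by simp
    qed
    have "allowed V \<kappa> F ((\<phi>(w := None))(v := None))"
    proof -
      have "(\<phi>(w := None)) v \<noteq> None" using step.prems False by simp
      from step.IH[OF this] show ?thesis .
    qed
    moreover have "(\<phi>(w := None))(v := None) = ?\<psi>(w := None)"
      by (auto simp: fun_upd_twist False)
    ultimately have al: "allowed V \<kappa> F (?\<psi>(w := None))" by simp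
    have wn: "?\<psi> w \<noteq> None" using step.hyps(3) False by simp
    show ?thesis by (rule allowed.step[OF pc step.hyps(2) wn notF al])
  qed
qed

lemma downT:
  assumes F3: "\<forall>u\<in>V. closed_upward V \<kappa> (F u)"
    and fin: "finite T"
  shows "allowed V \<kappa> F \<psi> \<Longrightarrow> allowed V \<kappa> F (\<lambda>x. if x \<in> T then None else \<psi> x)"
  using fin
proof (induction T rule: finite_induct)
  case empty
  then show ?case by simp
next
  case (insert x T)
  let ?f = "\<lambda>y. if y \<in> T then None else \<psi> y"
  have a: "allowed V \<kappa> F ?f" using insert by simp
  have e: "(\<lambda>y. if y \<in> insert x T then None else \<psi> y) = ?f(x := None)"
    by auto
  show ?case
  proof (cases "?f x = None")
    case True
    then have "?f(x := None) = ?f" by (rule fun_upd_idem)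
    then show ?thesis using a e by simp
  next
    case False
    show ?thesis using down1[OF F3 a False] e by simp
  qed
qed

theorem lemma5:
  fixes V :: "'v set" and \<kappa> :: nat and F :: "'v \<Rightarrow> ('v \<Rightarrow> nat option) set"
  assumes "finite V"
    and "\<kappa> > 0"
    and "\<forall>u\<in>V. F u \<subseteq> partial_colorings V \<kappa>"
    and "\<forall>u\<in>V. \<forall>\<phi>\<in>F u. \<phi> u \<noteq> None"
    and "\<forall>u\<in>V. closed_upward V \<kappa> (F u)"
  shows "closed_downward V {\<phi>. allowed V \<kappa> F \<phi>}
    \<and> (\<forall>v\<in>V. \<forall>\<phi>\<in>F v. allowed V \<kappa> F (\<phi>(v := None)) \<longrightarrow>
          (\<forall>S. S \<subseteq> V \<and> v \<in> S \<longrightarrow> allowed V \<kappa> F (\<lambda>x. if x \<in> S then None else \<phi> x)))"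
proof (intro conjI ballI impI allI)
  show "closed_downward V {\<phi>. allowed V \<kappa> F \<phi>}"
    unfolding closed_downward_def using down1[OF assms(5)] by auto
next
  fix v \<phi> S
  assume "v \<in> V" "\<phi> \<in> F v" "allowed V \<kappa> F (\<phi>(v := None))" "S \<subseteq> V \<and> v \<in> S"
  then have "finite S" using assms(1) finite_subset by blast
  from downT[OF assms(5) this \<open>allowed V \<kappa> F (\<phi>(v := None))\<close>]
  have "allowed V \<kappa> F (\<lambda>x. if x \<in> S then None else (\<phi>(v := None)) x)" .
  moreover have "(\<lambda>x. if x \<in> S then None else (\<phi>(v := None)) x) = (\<lambda>x. if x \<in> S then None else \<phi> x)"
    using \<open>S \<subseteq> V \<and> v \<in> S\<close> by auto
  ultimately show "allowed V \<kappa> F (\<lambda>x. if x \<in> S then None else \<phi> x)" by simp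
qed

end
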